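(* Let $t,t'\in B_n$ with $t\neq t'$, let $G$ be a digraph such that $\mathbb{A}(G)$ satisfies $t\approx t'$, and let $L=L_{t,t'}$. If $v_0\to v_1\to\dots\to v_{L+1}$ is a walk and $(v_L,v'_{L+1})$ is an edge in $G$ such that $v_{L+1}$ and $v'_{L+1}$ belong to nontrivial strongly connected components $K$ and $K'$ respectively, then $K=K'$. Consequently, $B_G<L_{t,t'}$.
   Context: Digraphs $G=(V,E)$ have $E\subseteq V\times V$, loops allowed, possibly infinite. $\mathbb{A}(G)$ is the groupoid on $V\cup\{\infty\}$ with $xy=x$ if $x,y\in V$, $(x,y)\in E$, and $xy=\infty$ otherwise. $B_n$: binary terms with $x_1,\dots,x_n$ each occurring once in this order; $G(t)$: rooted tree defined by $G(x_i)$ a single vertex and $G(t_1t_2)=G(t_1)\cup G(t_2)$ plus an edge from the leftmost variable of $t_1$ to that of $t_2$; root $x_1$. With $T=G(t)$, $T'=G(t')$ and depth $d_T$: $L_{t,t'}$ is the largest integer $m$ such that for all $x$, if $d_T(x)\le m$ or $d_{T'}(x)\le m$ then $d_T(x)=d_{T'}(x)$. A strongly connected component is trivial if it is a single vertex without a loop, nontrivial otherwise. $B_G$ is the largest integer $m$ such that there exist a walk $v_0\to\dots\to v_m$ and edges $(v_m,v_{m+1}),(v_m,v'_{m+1})$ with $v_{m+1},v'_{m+1}$ in distinct nontrivial strongly connected components ($\infty$ if unbounded, $-\infty$ if none). *)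

theory Defs
  imports Main "HOL-Library.Extended_Real"
begin

datatype bterm = Var nat | App bterm bterm

primrec vars :: "bterm \<Rightarrow> nat list" where
  "vars (Var i) = [i]"
| "vars (App s u) = vars s @ vars u"

text \<open>B_n: binary terms in which x_1,...,x_n each occur exactly once, in this order
  (variable x_i is encoded as Var i).\<close>
definition B :: "nat \<Rightarrow> bterm set" where
  "B n = {t. vars t = [1..<Suc n]}"

primrec leftmost :: "bterm \<Rightarrow> nat" where
  "leftmost (Var i) = i"
| "leftmost (App s u) = leftmost s"

text \<open>Edges of the rooted tree G(t); its vertex set is set (vars t), root leftmost t.\<close>
primrec tedges :: "bterm \<Rightarrow> (nat \<times> nat) set" where
  "tedges (Var i) = {}"
| "tedges (App s u) = tedges s \<union> tedges u \<union> {(leftmost s, leftmost u)}"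

definition depth :: "bterm \<Rightarrow> nat \<Rightarrow> nat" where
  "depth t x = (LEAST k. (leftmost t, x) \<in> (tedges t) ^^ k)"

definition Ltt :: "bterm \<Rightarrow> bterm \<Rightarrow> int" where
  "Ltt t t' = (GREATEST m::int. \<forall>x \<in> set (vars t).
       (int (depth t x) \<le> m \<or> int (depth t' x) \<le> m) \<longrightarrow> depth t x = depth t' x)"

text \<open>Universe V \<union> {\<infinity>}, with \<infinity> encoded as None.\<close>
definition Aop :: "('v \<times> 'v) set \<Rightarrow> 'v option \<Rightarrow> 'v option \<Rightarrow> 'v option" where
  "Aop E a b = (case (a, b) of
      (Some x, Some y) \<Rightarrow> (if (x, y) \<in> E then Some x else None)
    | _ \<Rightarrow> None)"

definition Acarrier :: "'v set \<Rightarrow> 'v option set" where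
  "Acarrier V = Some ` V \<union> {None}"

primrec evalA :: "('v \<times> 'v) set \<Rightarrow> (nat \<Rightarrow> 'v option) \<Rightarrow> bterm \<Rightarrow> 'v option" where
  "evalA E a (Var i) = a i"
| "evalA E a (App s u) = Aop E (evalA E a s) (evalA E a u)"

definition satisfies :: "'v set \<Rightarrow> ('v \<times> 'v) set \<Rightarrow> bterm \<Rightarrow> bterm \<Rightarrow> bool" where
  "satisfies V E t t' \<longleftrightarrow>
     (\<forall>a. (\<forall>i. a i \<in> Acarrier V) \<longrightarrow> evalA E a t = evalA E a t')"

definition is_scc :: "'v set \<Rightarrow> ('v \<times> 'v) set \<Rightarrow> 'v set \<Rightarrow> bool" where
  "is_scc V E K \<longleftrightarrow> (\<exists>v\<in>V. K = {u \<in> V. (v, u) \<in> E\<^sup>* \<and> (u, v) \<in> E\<^sup>*})"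

definition nontrivial_scc :: "'v set \<Rightarrow> ('v \<times> 'v) set \<Rightarrow> 'v set \<Rightarrow> bool" where
  "nontrivial_scc V E K \<longleftrightarrow> is_scc V E K \<and> \<not> (\<exists>v. K = {v} \<and> (v, v) \<notin> E)"

text \<open>B_G as an extended real: Sup of the admissible m (Sup {} = -\<infinity>, unbounded gives \<infinity>).\<close>
definition BG :: "'v set \<Rightarrow> ('v \<times> 'v) set \<Rightarrow> ereal" where
  "BG V E = Sup {ereal (real m) | m. \<exists>w v v' K K'.
      (\<forall>i<m. (w i, w (Suc i)) \<in> E) \<and> (w m, v) \<in> E \<and> (w m, v') \<in> E \<and>
      nontrivial_scc V E K \<and> nontrivial_scc V E K' \<and> K \<noteq> K' \<and> v \<in> K \<and> v' \<in> K'}"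

end

theory Submission
  imports Defs
begin


primrec rdepth :: "bterm \<Rightarrow> nat \<Rightarrow> nat" where
  "rdepth (Var i) x = 0"
| "rdepth (App s u) x = (if x \<in> set (vars s) then rdepth s x else Suc (rdepth u x))"

definition homT :: "('v \<times> 'v) set \<Rightarrow> bterm \<Rightarrow> (nat \<Rightarrow> 'v) \<Rightarrow> bool" where
  "homT E t f \<longleftrightarrow> (\<forall>(i,j)\<in>tedges t. (f i, f j) \<in> E)"

lemma vars_ne: "vars t \<noteq> []"
  by (induction t) auto

lemma leftmost_hd: "leftmost t = hd (vars t)"
  by (induction t) (auto simp: vars_ne)

lemma leftmost_in: "leftmost t \<in> set (vars t)"
  by (simp add: leftmost_hd vars_ne)

lemma rdepth_leftmost: "rdepth t (leftmost t) = 0"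
  by (induction t) (auto simp: leftmost_in)

lemma rdepth_zero: "distinct (vars t) \<Longrightarrow> x \<in> set (vars t) \<Longrightarrow> rdepth t x = 0 \<Longrightarrow> x = leftmost t"
  by (induction t) (auto split: if_splits)

lemma edge_in: "(i,j) \<in> tedges t \<Longrightarrow> i \<in> set (vars t) \<and> j \<in> set (vars t)"
  by (induction t) (auto simp: leftmost_in)

lemma edge_not_root: "distinct (vars t) \<Longrightarrow> (i,j) \<in> tedges t \<Longrightarrow> j \<noteq> leftmost t"
proof (induction t)
  case (Var x)
  then show ?case by simp
next
  case (App s u)
  have d: "set (vars s) \<inter> set (vars u) = {}" using App.prems by simp
  have ls: "leftmost s \<in> set (vars s)" "leftmost u \<in> set (vars u)" by (auto simp: leftmost_in)
  from App.prems(2) consider "(i,j) \<in> tedges s" | "(i,j) \<in> tedges u" | "j = leftmost u" by auto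
  then show ?case
  proof cases
    case 1 then show ?thesis using App by simp
  next
    case 2 then have "j \<in> set (vars u)" using edge_in by blast
    then show ?thesis using d ls by auto
  next
    case 3 then show ?thesis using d ls by auto
  qed
qed

lemma relpow_mono: fixes R S :: "('a \<times> 'a) set" shows "R \<subseteq> S \<Longrightarrow> R ^^ n \<subseteq> S ^^ n"
  by (induction n) (simp_all add: relcomp_mono)

lemma parent_unique: "distinct (vars t) \<Longrightarrow> (i,j) \<in> tedges t \<Longrightarrow> (k,j) \<in> tedges t \<Longrightarrow> i = k"
  by (induction t) (auto simp: leftmost_in dest: edge_in edge_not_root)

lemma edge_depth: "distinct (vars t) \<Longrightarrow> (i,j) \<in> tedges t \<Longrightarrow> rdepth t j = Suc (rdepth t i)"
  by (induction t) (auto simp: leftmost_in rdepth_leftmost dest: edge_in)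

lemma edge_less: "sorted_wrt (<) (vars t) \<Longrightarrow> (i,j) \<in> tedges t \<Longrightarrow> i < j"
  by (induction t) (auto simp: leftmost_in sorted_wrt_append dest: edge_in)

lemma trancl_less:
  assumes "sorted_wrt (<) (vars t)" "(i,j) \<in> (tedges t)\<^sup>+" shows "i < j"
  using assms(2) by (induction rule: trancl_induct) (auto dest: edge_less[OF assms(1)])

lemma rtrancl_ge:
  assumes "sorted_wrt (<) (vars t)" "(i,j) \<in> (tedges t)\<^sup>*" shows "i \<le> j"
  using assms(2) by (induction rule: rtrancl_induct) (auto dest: edge_less[OF assms(1)])

lemma path_exists:
  "distinct (vars t) \<Longrightarrow> x \<in> set (vars t) \<Longrightarrow> k \<le> rdepth t x \<Longrightarrow>
   \<exists>u \<in> set (vars t). rdepth t u = k \<and> (u,x) \<in> (tedges t)\<^sup>*"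
proof (induction t arbitrary: x k)
  case (Var i)
  then show ?case by auto
next
  case (App s u)
  show ?case
  proof (cases "x \<in> set (vars s)")
    case True
    with App obtain y where "y \<in> set (vars s)" "rdepth s y = k" "(y,x) \<in> (tedges s)\<^sup>*" by auto
    moreover have "(tedges s)\<^sup>* \<subseteq> (tedges (App s u))\<^sup>*" by (rule rtrancl_mono) auto
    ultimately show ?thesis by auto
  next
    case False
    then have xu: "x \<in> set (vars u)" using App by auto
    have mono: "(tedges u)\<^sup>* \<subseteq> (tedges (App s u))\<^sup>*" by (rule rtrancl_mono) auto
    have du: "distinct (vars u)" using App by auto
    show ?thesis
    proof (cases k)
      case 0
      obtain y where y: "y \<in> set (vars u)" "rdepth u y = 0" "(y,x) \<in> (tedges u)\<^sup>*"
        using App.IH(2)[OF du xu, of 0] by auto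
      then have "y = leftmost u" using rdepth_zero du by blast
      then have "(leftmost u, x) \<in> (tedges (App s u))\<^sup>*" using y mono by auto
      then have "(leftmost s, x) \<in> (tedges (App s u))\<^sup>*"
        by (rule converse_rtrancl_into_rtrancl[rotated]) auto
      then show ?thesis using 0 by (auto intro!: bexI[of _ "leftmost s"] simp: leftmost_in rdepth_leftmost)
    next
      case (Suc k')
      obtain y where y: "y \<in> set (vars u)" "rdepth u y = k'" "(y,x) \<in> (tedges u)\<^sup>*"
        using App.IH(2)[OF du xu, of k'] App.prems False Suc by auto
      have "y \<notin> set (vars s)" using y(1) App.prems(1) by auto
      then show ?thesis using y mono Suc by (auto intro!: bexI[of _ y])
    qed
  qed
qed

lemma relpow_path: "x \<in> set (vars t) \<Longrightarrow> (leftmost t, x) \<in> tedges t ^^ rdepth t x"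
proof (induction t arbitrary: x)
  case (Var i) then show ?case by auto
next
  case (App s u)
  show ?case
  proof (cases "x \<in> set (vars s)")
    case True
    then have "(leftmost s, x) \<in> tedges s ^^ rdepth s x" using App by auto
    moreover have "tedges s ^^ rdepth s x \<subseteq> tedges (App s u) ^^ rdepth s x"
      by (rule relpow_mono) auto
    ultimately show ?thesis using True by auto
  next
    case False
    then have "(leftmost u, x) \<in> tedges u ^^ rdepth u x" using App by auto
    moreover have "tedges u ^^ rdepth u x \<subseteq> tedges (App s u) ^^ rdepth u x"
      by (rule relpow_mono) auto
    ultimately have "(leftmost u, x) \<in> tedges (App s u) ^^ rdepth u x" by auto
    then have "(leftmost s, x) \<in> tedges (App s u) ^^ Suc (rdepth u x)"
      by (rule relpow_Suc_I2[rotated]) auto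
    then show ?thesis using False by auto
  qed
qed

lemma relpow_depth:
  assumes "distinct (vars t)"
  shows "(leftmost t, y) \<in> tedges t ^^ k \<Longrightarrow> rdepth t y = k"
proof (induction k arbitrary: y)
  case 0 then show ?case by (auto simp: rdepth_leftmost)
next
  case (Suc k)
  then obtain z where "(leftmost t, z) \<in> tedges t ^^ k" "(z,y) \<in> tedges t" by auto
  then show ?case using Suc.IH edge_depth[OF assms] by auto
qed

lemma depth_eq: "distinct (vars t) \<Longrightarrow> x \<in> set (vars t) \<Longrightarrow> depth t x = rdepth t x"
  unfolding depth_def
  by (rule Least_equality) (auto intro: relpow_path dest: relpow_depth)

lemma split_aux:
  assumes d: "distinct (vars s @ vars u)" and e1: "vars s @ us = vars s'" and e2: "vars u = us @ vars u'"
    and ne: "us \<noteq> []"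
    and ag: "\<forall>x\<in>set (vars s @ vars u). rdepth (App s u) x = rdepth (App s' u') x"
  shows False
proof -
  define l where "l = leftmost u'"
  have lu: "l \<in> set (vars u)" using e2 leftmost_in[of u'] l_def by auto
  have lus: "l \<notin> set us" using d e2 leftmost_in[of u'] l_def by auto
  have lneq: "l \<noteq> leftmost u" using ne lus e2 by (auto simp: leftmost_hd)
  have ls: "l \<notin> set (vars s)" using d lu by auto
  have "rdepth u l \<noteq> 0" using rdepth_zero[of u l] d lu lneq by auto
  then have "rdepth (App s u) l \<ge> 2" using ls by auto
  moreover have "l \<notin> set (vars s')" using ls lus e1[symmetric] by auto
  then have "rdepth (App s' u') l = 1" using l_def rdepth_leftmost[of u'] by auto
  ultimately show False using ag lu by force
qed

lemma len_app: "length (vars (App s u)) \<ge> 2"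
  using vars_ne[of s] vars_ne[of u] by (cases "vars s"; cases "vars u") auto

lemma rdepth_inj:
  "distinct (vars t) \<Longrightarrow> vars t = vars t' \<Longrightarrow> (\<forall>x\<in>set (vars t). rdepth t x = rdepth t' x) \<Longrightarrow> t = t'"
proof (induction t arbitrary: t')
  case (Var i)
  show ?case
  proof (cases t')
    case (Var j) then show ?thesis using Var.prems by simp
  next
    case (App s' u')
    have "length (vars (Var i)) = length (vars t')" using Var.prems(2) by simp
    then show ?thesis using App len_app[of s' u'] by simp
  qed
next
  case (App s u)
  show ?case
  proof (cases t')
    case (Var j)
    have "length (vars (App s u)) = length (vars t')" using App.prems(2) by simp
    then show ?thesis using Var len_app[of s u] by simp
  next
    case (App s' u')
    note t'def = this
    have d: "distinct (vars s @ vars u)" using App.prems(1) by simp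
    have eq: "vars s @ vars u = vars s' @ vars u'" using App.prems(2) t'def by simp
    have ag: "\<forall>x\<in>set (vars s @ vars u). rdepth (App s u) x = rdepth (App s' u') x"
      using App.prems(3) t'def by simp
    have d': "distinct (vars s' @ vars u')" using d eq by simp
    have ag': "\<forall>x\<in>set (vars s' @ vars u'). rdepth (App s' u') x = rdepth (App s u) x"
      using ag eq by simp
    have ss: "vars s = vars s'"
    proof -
      obtain us where
        "(vars s = vars s' @ us \<and> us @ vars u = vars u') \<or> (vars s @ us = vars s' \<and> vars u = us @ vars u')"
        using eq by (auto simp: append_eq_append_conv2)
      then show ?thesis
      proof
        assume h: "vars s = vars s' @ us \<and> us @ vars u = vars u'"
        show ?thesis
        proof (cases "us = []")
          case True then show ?thesis using h by simp
        next
          case False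
          show ?thesis using split_aux[OF d', of us s u] h False ag' by simp
        qed
      next
        assume h: "vars s @ us = vars s' \<and> vars u = us @ vars u'"
        show ?thesis
        proof (cases "us = []")
          case True then show ?thesis using h by simp
        next
          case False
          show ?thesis using split_aux[OF d, of us s' u'] h False ag by simp
        qed
      qed
    qed
    have uu: "vars u = vars u'" using eq ss by simp
    have "\<forall>x\<in>set (vars s). rdepth s x = rdepth s' x"
    proof
      fix x assume "x \<in> set (vars s)"
      then have "rdepth (App s u) x = rdepth (App s' u') x" by (intro ag[rule_format]) simp
      then show "rdepth s x = rdepth s' x" using \<open>x \<in> set (vars s)\<close> ss by simp
    qed
    then have "s = s'" using App.IH(1)[of s'] d ss by simp
    moreover have "\<forall>x\<in>set (vars u). rdepth u x = rdepth u' x"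
    proof
      fix x assume xu: "x \<in> set (vars u)"
      then have "x \<notin> set (vars s)" using d by auto
      then have "x \<notin> set (vars s')" using ss by simp
      have "rdepth (App s u) x = rdepth (App s' u') x" using xu by (intro ag[rule_format]) simp
      then show "rdepth u x = rdepth u' x" using \<open>x \<notin> set (vars s')\<close> \<open>x \<notin> set (vars s)\<close> by simp
    qed
    then have "u = u'" using App.IH(2)[of u'] d uu by simp
    ultimately show ?thesis using t'def by simp
  qed
qed

lemma evalA_hom:
  "evalA E (\<lambda>i. Some (f i)) t = (if homT E t f then Some (f (leftmost t)) else None)"
  by (induction t) (auto simp: homT_def Aop_def)



primrec walkK :: "('v \<times> 'v) set \<Rightarrow> 'v set \<Rightarrow> 'v \<Rightarrow> nat \<Rightarrow> 'v" where
  "walkK E K s 0 = s"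
| "walkK E K s (Suc i) = (SOME z. z \<in> K \<and> (walkK E K s i, z) \<in> E)"

lemma scc_succ:
  assumes EV: "E \<subseteq> V \<times> V" and K: "nontrivial_scc V E K" and a: "a \<in> K"
  shows "\<exists>z\<in>K. (a,z) \<in> E"
proof -
  obtain c where c: "c \<in> V" "K = {u \<in> V. (c, u) \<in> E\<^sup>* \<and> (u, c) \<in> E\<^sup>*}"
    using K unfolding nontrivial_scc_def is_scc_def by blast
  show ?thesis
  proof (cases "K = {a}")
    case True
    then have "(a,a) \<in> E" using K unfolding nontrivial_scc_def by blast
    then show ?thesis using a by blast
  next
    case False
    then obtain b where b: "b \<in> K" "b \<noteq> a" using a by blast
    have "(a,c) \<in> E\<^sup>*" "(c,b) \<in> E\<^sup>*" using a b c by auto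
    then have "(a,b) \<in> E\<^sup>*" by simp
    then have "(a,b) \<in> E\<^sup>+" using b(2) by (simp add: rtrancl_eq_or_trancl)
    then obtain z where z: "(a,z) \<in> E" "(z,b) \<in> E\<^sup>*" by (blast dest: tranclD)
    have "z \<in> V" using z(1) EV by auto
    moreover have "(c,z) \<in> E\<^sup>*" using \<open>(a,c) \<in> E\<^sup>*\<close> a c z(1) by (auto intro: rtrancl_into_rtrancl)
    moreover have "(z,c) \<in> E\<^sup>*" using z(2) b c by (auto intro: rtrancl_trans)
    ultimately have "z \<in> K" using c by auto
    then show ?thesis using z by blast
  qed
qed

lemma walkK_in:
  assumes EV: "E \<subseteq> V \<times> V" and K: "nontrivial_scc V E K" and s: "s \<in> K"
  shows "walkK E K s i \<in> K \<and> (walkK E K s i, walkK E K s (Suc i)) \<in> E"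
proof -
  have step: "(SOME z. z \<in> K \<and> (a, z) \<in> E) \<in> K \<and> (a, SOME z. z \<in> K \<and> (a, z) \<in> E) \<in> E"
    if "a \<in> K" for a
  proof -
    have "\<exists>z. z \<in> K \<and> (a, z) \<in> E" using scc_succ[OF EV K that] by blast
    from someI_ex[OF this] show ?thesis .
  qed
  have mem: "walkK E K s j \<in> K" for j
    by (induction j) (use s step in auto)
  show ?thesis using mem[of i] step[OF mem[of i]] by simp
qed

lemma scc_merge:
  assumes K: "is_scc V E K" and K': "is_scc V E K'" and "a \<in> K" "a2 \<in> K" "b \<in> K'" "b2 \<in> K'"
    and "(a,b) \<in> E\<^sup>*" "(b2,a2) \<in> E\<^sup>*"
  shows "K = K'"
proof -
  obtain c where c: "K = {u \<in> V. (c, u) \<in> E\<^sup>* \<and> (u, c) \<in> E\<^sup>*}"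
    using K unfolding is_scc_def by blast
  obtain c' where c': "K' = {u \<in> V. (c', u) \<in> E\<^sup>* \<and> (u, c') \<in> E\<^sup>*}"
    using K' unfolding is_scc_def by blast
  have "(c,c') \<in> E\<^sup>*" using assms c c' by (blast intro: rtrancl_trans)
  moreover have "(c',c) \<in> E\<^sup>*" using assms c c' by (blast intro: rtrancl_trans)
  ultimately show ?thesis using c c' by (blast intro: rtrancl_trans)
qed



lemma core:
  fixes t t' :: bterm and L :: nat and w :: "nat \<Rightarrow> 'v"
  assumes EV: "E \<subseteq> V \<times> V"
    and dist: "distinct (vars t)" and sorted: "sorted_wrt (<) (vars t)" "sorted_wrt (<) (vars t')"
    and vv: "vars t = vars t'"
    and hom: "\<And>f. (\<forall>i. f i \<in> V) \<Longrightarrow> homT E t f \<Longrightarrow> homT E t' f"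
    and agree: "\<And>y. y \<in> set (vars t) \<Longrightarrow> rdepth t y \<le> L \<or> rdepth t' y \<le> L \<Longrightarrow> rdepth t y = rdepth t' y"
    and x: "x \<in> set (vars t)" "rdepth t x = Suc L" "rdepth t' x > Suc L"
    and walk: "\<forall>i < Suc L. (w i, w (Suc i)) \<in> E" and ev': "(w L, v') \<in> E"
    and K: "nontrivial_scc V E K" "w (Suc L) \<in> K" and K': "nontrivial_scc V E K'" "v' \<in> K'"
  shows "K = K'"
proof -
  have dist': "distinct (vars t')" using dist vv by simp
  have xt': "x \<in> set (vars t')" using x vv by simp
  obtain u where u: "u \<in> set (vars t')" "rdepth t' u = Suc L" "(u,x) \<in> (tedges t')\<^sup>*"
    using path_exists[OF dist' xt', of "Suc L"] x(3) by auto
  have "u \<noteq> x" using u(2) x(3) by auto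
  then have "(u,x) \<in> (tedges t')\<^sup>+" using u(3) by (simp add: rtrancl_eq_or_trancl)
  then have ux: "u < x" using trancl_less[OF sorted(2)] by blast
  have ut: "u \<in> set (vars t)" using u vv by simp
  have du: "\<not> rdepth t u \<le> L" using agree[OF ut] u(2) by force
  define X where "X = {y. (x,y) \<in> (tedges t)\<^sup>*}"
  have uX: "u \<notin> X" using ux rtrancl_ge[OF sorted(1)] unfolding X_def by force
  have xX: "x \<in> X" unfolding X_def by simp
  have wV: "w k \<in> V" if "k \<le> L" for k
  proof -
    have "(w k, w (Suc k)) \<in> E" using walk that by simp
    then show ?thesis using EV by auto
  qed
  have gen: "(\<beta> (rdepth t u - Suc L), \<alpha> 0) \<in> E\<^sup>*"
    if al: "\<forall>i. (\<alpha> i, \<alpha> (Suc i)) \<in> E" and be: "\<forall>i. (\<beta> i, \<beta> (Suc i)) \<in> E"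
      and a0: "(w L, \<alpha> 0) \<in> E" and b0: "(w L, \<beta> 0) \<in> E" for \<alpha> \<beta>
  proof -
    define f where "f y = (if rdepth t y \<le> L then w (rdepth t y)
       else if y \<in> X then \<alpha> (rdepth t y - Suc L) else \<beta> (rdepth t y - Suc L))" for y
    have fV: "\<forall>i. f i \<in> V"
    proof
      fix i
      have "\<alpha> k \<in> V" "\<beta> k \<in> V" for k using al be EV by auto
      then show "f i \<in> V" unfolding f_def using wV by auto
    qed
    have "homT E t f"
      unfolding homT_def
    proof (intro ballI, clarify)
      fix i j assume ij: "(i,j) \<in> tedges t"
      have dj: "rdepth t j = Suc (rdepth t i)" using edge_depth[OF dist ij] .
      consider "rdepth t j \<le> L" | "rdepth t j = Suc L" | "rdepth t j > Suc L" by linarith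
      then show "(f i, f j) \<in> E"
      proof cases
        case 1
        then show ?thesis using walk dj unfolding f_def by auto
      next
        case 2
        then have "rdepth t i = L" using dj by simp
        then show ?thesis using 2 a0 b0 unfolding f_def by auto
      next
        case 3
        have iX: "i \<in> X \<longleftrightarrow> j \<in> X"
        proof
          assume "i \<in> X" then show "j \<in> X" using ij unfolding X_def by (auto intro: rtrancl_into_rtrancl)
        next
          assume "j \<in> X"
          then have "(x,j) \<in> (tedges t)\<^sup>*" unfolding X_def by simp
          moreover have "x \<noteq> j" using 3 x(2) by auto
          ultimately obtain k where "(x,k) \<in> (tedges t)\<^sup>*" "(k,j) \<in> tedges t"
            by (metis rtranclE)
          moreover then have "k = i" using parent_unique[OF dist _ ij] by blast
          ultimately show "i \<in> X" unfolding X_def by simp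
        qed
        have "\<not> rdepth t i \<le> L" using 3 dj by simp
        moreover have "rdepth t j - Suc L = Suc (rdepth t i - Suc L)" using 3 dj by simp
        ultimately show ?thesis using 3 iX al be unfolding f_def by auto
      qed
    qed
    then have h': "homT E t' f" using hom fV by blast
    have "(f u, f x) \<in> E\<^sup>*" using u(3)
    proof (induction rule: rtrancl_induct)
      case base then show ?case by simp
    next
      case (step y z)
      then have "(f y, f z) \<in> E" using h' unfolding homT_def by auto
      then show ?case using step.IH by (rule rtrancl_into_rtrancl[rotated])
    qed
    moreover have "f u = \<beta> (rdepth t u - Suc L)" using du uX unfolding f_def by simp
    moreover have "f x = \<alpha> 0" using xX x(2) unfolding f_def by simp
    ultimately show ?thesis by simp
  qed
  have EV': "E \<subseteq> V \<times> V" using EV .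
  define aK where "aK = walkK E K (w (Suc L))"
  define aK' where "aK' = walkK E K' v'"
  have wK: "\<forall>i. (aK i, aK (Suc i)) \<in> E" "\<forall>i. aK i \<in> K"
    using walkK_in[OF EV K] unfolding aK_def by auto
  have wK': "\<forall>i. (aK' i, aK' (Suc i)) \<in> E" "\<forall>i. aK' i \<in> K'"
    using walkK_in[OF EV K'] unfolding aK'_def by auto
  have wL: "(w L, w (Suc L)) \<in> E" using walk by simp
  have a0: "aK 0 = w (Suc L)" "aK' 0 = v'" unfolding aK_def aK'_def by simp_all
  have r1: "(aK (rdepth t u - Suc L), aK' 0) \<in> E\<^sup>*"
    using gen[of aK' aK] wK wK' a0 wL ev' by simp
  have r2: "(aK' (rdepth t u - Suc L), aK 0) \<in> E\<^sup>*"
    using gen[of aK aK'] wK wK' a0 wL ev' by simp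
  show ?thesis
    using scc_merge[of V E K K', OF _ _ _ _ _ _ r1 r2] K K' wK wK'
    unfolding nontrivial_scc_def by blast
qed



lemma int_greatest:
  fixes P :: "int \<Rightarrow> bool"
  assumes p0: "P m0" and bd: "\<forall>m. P m \<longrightarrow> m < b"
  shows "P (Greatest P) \<and> (\<forall>m. P m \<longrightarrow> m \<le> Greatest P)"
proof -
  define S where "S = {m. P m \<and> m0 \<le> m \<and> m \<le> b}"
  have fin: "finite S" unfolding S_def by (rule finite_subset[of _ "{m0..b}"]) auto
  have m0S: "m0 \<in> S" using p0 bd unfolding S_def by force
  define M where "M = Max S"
  have MS: "M \<in> S" using fin m0S unfolding M_def by (intro Max_in) auto
  have PM: "P M" using MS unfolding S_def by simp
  have up: "\<forall>m. P m \<longrightarrow> m \<le> M"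
  proof (intro allI impI)
    fix m assume "P m"
    show "m \<le> M"
    proof (cases "m < m0")
      case True
      have "m0 \<le> M" using fin m0S unfolding M_def by simp
      then show ?thesis using True by simp
    next
      case False
      then have "m \<in> S" using \<open>P m\<close> bd unfolding S_def by force
      then show ?thesis using fin unfolding M_def by simp
    qed
  qed
  have "Greatest P = M" by (rule Greatest_equality) (use PM up in auto)
  then show ?thesis using PM up by simp
qed

theorem lemma6p19:
  fixes V :: "'v set" and E :: "('v \<times> 'v) set" and n :: nat and t t' :: bterm
  assumes "E \<subseteq> V \<times> V"
    and "t \<in> B n" and "t' \<in> B n" and "t \<noteq> t'"
    and "satisfies V E t t'"
  shows "(\<forall>(w :: nat \<Rightarrow> 'v) v' K K'.
            (\<forall>i < Suc (nat (Ltt t t')). (w i, w (Suc i)) \<in> E) \<and>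
            (w (nat (Ltt t t')), v') \<in> E \<and>
            nontrivial_scc V E K \<and> nontrivial_scc V E K' \<and>
            w (Suc (nat (Ltt t t'))) \<in> K \<and> v' \<in> K'
          \<longrightarrow> K = K')
       \<and> BG V E < ereal (real_of_int (Ltt t t'))"
proof -
  note EV = assms(1)
  have vt: "vars t = [1..<Suc n]" "vars t' = [1..<Suc n]" using assms(2,3) unfolding B_def by auto
  then have vv: "vars t = vars t'" by simp
  have dist: "distinct (vars t)" "distinct (vars t')" by (simp_all only: vt sorted_wrt_upt distinct_upt)
  have sorted: "sorted_wrt (<) (vars t)" "sorted_wrt (<) (vars t')" by (simp_all only: vt sorted_wrt_upt distinct_upt)
  have homeq: "homT E t f \<longleftrightarrow> homT E t' f" if fV: "\<forall>i. f i \<in> V" for f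
  proof -
    have "\<forall>i. Some (f i) \<in> Acarrier V" using fV unfolding Acarrier_def by auto
    then have "evalA E (\<lambda>i. Some (f i)) t = evalA E (\<lambda>i. Some (f i)) t'"
      using assms(5) unfolding satisfies_def by (elim allE[where x="\<lambda>i. Some (f i)"]) blast
    then show ?thesis unfolding evalA_hom by (auto split: if_splits)
  qed
  have dt: "depth t y = rdepth t y" "depth t' y = rdepth t' y" if "y \<in> set (vars t)" for y
    using depth_eq[OF dist(1) that] depth_eq[OF dist(2)] that vv by auto
  define P where "P = (\<lambda>m::int. \<forall>x \<in> set (vars t).
       (int (depth t x) \<le> m \<or> int (depth t' x) \<le> m) \<longrightarrow> depth t x = depth t' x)"
  have LP: "Ltt t t' = Greatest P" unfolding Ltt_def P_def by simp
  obtain x0 where x0: "x0 \<in> set (vars t)" "rdepth t x0 \<noteq> rdepth t' x0"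
    using rdepth_inj[OF dist(1) vv] assms(4) by blast
  have bd: "\<forall>m. P m \<longrightarrow> m < int (rdepth t x0)"
    using x0 dt[OF x0(1)] unfolding P_def by force
  have p0: "P (-1)" unfolding P_def by simp
  define Lt where "Lt = Ltt t t'"
  have PL: "P Lt" and upL: "\<forall>m. P m \<longrightarrow> m \<le> Lt"
    using int_greatest[OF p0 bd] LP unfolding Lt_def by auto
  have "\<not> P (Lt + 1)" using upL by force
  then obtain x where x: "x \<in> set (vars t)" "int (rdepth t x) \<le> Lt + 1 \<or> int (rdepth t' x) \<le> Lt + 1"
      "rdepth t x \<noteq> rdepth t' x"
    unfolding P_def using dt by auto
  have xgt: "int (rdepth t x) > Lt" "int (rdepth t' x) > Lt"
    using PL x dt[OF x(1)] unfolding P_def by force+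
  have Lt0: "Lt \<ge> 0"
  proof (rule ccontr)
    assume "\<not> Lt \<ge> 0"
    then have "rdepth t x = 0 \<or> rdepth t' x = 0" using x(2) by linarith
    moreover have "leftmost t = leftmost t'" using vv by (simp add: leftmost_hd)
    moreover have "x \<in> set (vars t')" using x(1) vv by simp
    ultimately have "x = leftmost t \<and> x = leftmost t'"
      using rdepth_zero[OF dist(1) x(1)] rdepth_zero[OF dist(2)] by auto
    then show False using x(3) rdepth_leftmost[of t] rdepth_leftmost[of t'] by metis
  qed
  define L where "L = nat Lt"
  have LL: "int L = Lt" using Lt0 unfolding L_def by simp
  have agree: "rdepth t y = rdepth t' y" if "y \<in> set (vars t)" "rdepth t y \<le> L \<or> rdepth t' y \<le> L" for y
    using PL that dt[OF that(1)] LL unfolding P_def by force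
  have cases: "(rdepth t x = Suc L \<and> rdepth t' x > Suc L) \<or> (rdepth t' x = Suc L \<and> rdepth t x > Suc L)"
    using x(2,3) xgt LL by linarith
  have part1: "K = K'"
    if walk: "\<forall>i < Suc L. (w i, w (Suc i)) \<in> E" and ev': "(w L, v') \<in> E"
      and K: "nontrivial_scc V E K" "w (Suc L) \<in> K" and K': "nontrivial_scc V E K'" "v' \<in> K'"
    for w :: "nat \<Rightarrow> 'v" and v' K K'
    using cases
  proof
    assume c: "rdepth t x = Suc L \<and> rdepth t' x > Suc L"
    show ?thesis
      by (rule core[OF EV dist(1) sorted vv _ agree x(1) _ _ walk ev' K K'])
        (use homeq c in auto)
  next
    assume c: "rdepth t' x = Suc L \<and> rdepth t x > Suc L"
    have x': "x \<in> set (vars t')" using x(1) vv by simp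
    have agree': "rdepth t' y = rdepth t y" if "y \<in> set (vars t')" "rdepth t' y \<le> L \<or> rdepth t y \<le> L" for y
      using agree[of y] that vv by auto
    show ?thesis
      by (rule core[OF EV dist(2) sorted(2) sorted(1) vv[symmetric] _ agree' x' _ _ walk ev' K K'])
        (use homeq c in auto)
  qed
  have P1: "\<forall>(w :: nat \<Rightarrow> 'v) v' K K'.
            (\<forall>i < Suc (nat (Ltt t t')). (w i, w (Suc i)) \<in> E) \<and>
            (w (nat (Ltt t t')), v') \<in> E \<and>
            nontrivial_scc V E K \<and> nontrivial_scc V E K' \<and>
            w (Suc (nat (Ltt t t'))) \<in> K \<and> v' \<in> K'
          \<longrightarrow> K = K'"
    using part1 unfolding L_def Lt_def by blast
  have BGle: "BG V E \<le> ereal (real_of_int Lt - 1)"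
    unfolding BG_def
  proof (rule Sup_least, clarify)
    fix m :: nat and w v v' K K'
    assume h: "\<forall>i<m. (w i, w (Suc i)) \<in> E" "(w m, v) \<in> E" "(w m, v') \<in> E"
      "nontrivial_scc V E K" "nontrivial_scc V E K'" "K \<noteq> K'" "v \<in> K" "v' \<in> K'"
    have "m < L"
    proof (rule ccontr)
      assume "\<not> m < L"
      define w2 where "w2 i = (if i \<le> L then w (i + (m - L)) else v)" for i
      have "\<forall>i < Suc L. (w2 i, w2 (Suc i)) \<in> E"
      proof (intro allI impI)
        fix i assume "i < Suc L"
        show "(w2 i, w2 (Suc i)) \<in> E"
        proof (cases "i = L")
          case True then show ?thesis using h(2) \<open>\<not> m < L\<close> unfolding w2_def by simp
        next
          case False
          then have "i + (m - L) < m" using \<open>i < Suc L\<close> \<open>\<not> m < L\<close> by simp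
          then show ?thesis using h(1) False \<open>i < Suc L\<close> unfolding w2_def by auto
        qed
      qed
      moreover have "(w2 L, v') \<in> E" "w2 (Suc L) = v" using h(3) \<open>\<not> m < L\<close> unfolding w2_def by simp_all
      ultimately have "K = K'" using part1[of w2 v' K K'] h by simp
      then show False using h(6) by simp
    qed
    then have "real m \<le> real_of_int Lt - 1" using LL by linarith
    then show "ereal (real m) \<le> ereal (real_of_int Lt - 1)" by simp
  qed
  also have "\<dots> < ereal (real_of_int Lt)" by simp
  finally show ?thesis using P1 unfolding Lt_def by simp
qed

end
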